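(* The relay rules in $\mathcal{IFR}$ emulate each of the process rules Introduction, Delegation, Fusion, and Reversal; that is, for each of these process rules $p$, for every simple relay graph $G_R$ and every possible application of $p$ to $\mathrm{CPG}(G_R)$ yielding a process graph $G_P'$, there is a simple relay graph $G_R'$ with $\mathrm{CPG}(G_R')=G_P'$ (up to isomorphism) that can be obtained from $G_R$ by applying rules from $\mathcal{IFR}$ only.
   Context: Relay model. There is a set $P$ of processes. Each process owns a set of relays. Every relay $r$ has exactly one outgoing connection: either $r$ is a sink relay (its messages are delivered to its owning process) or it points to another relay; following outgoing connections never cycles and ends at a unique sink relay, whose owner is the sink process of $r$. A process $u$ "has a relay $r$ to" $v$ if $u$ owns $r$ (or will upon receipt of a message in transit) and $v$ is the sink process of $r$. A relay is direct if it is a sink or points to a sink relay. $\mathrm{incoming}(r)$ is the number of connections into $r$; $\mathrm{same\text{-}target}(r,r')$ holds iff $r,r'$ have the same outgoing target. A process may create new sink relays at any time. When $u$ sends a relay $s$ it owns via a relay $r$ it owns, upon receipt the sink process of $r$ obtains a new relay whose outgoing connection points to $s$. Deleting a relay removes it; merging relays with the same target and no incoming connections replaces them by one relay with that target. Relay graph: directed graph on $P\cup R$ with explicit edges (process $\to$ owned relay, relay $\to$ its outgoing target relay, sink relay $\to$ owning process) and implicit edges (relay $r\to$ relay $w$ if a message in $r$'s buffer contains a reference to $w$). A simple relay graph is a relay graph in which all edges are explicit, all relays are direct, and every sink relay has exactly one incoming connection. Its corresponding process graph $\mathrm{CPG}(G)$ is the multigraph on $P$ containing an edge $(u,v)$ for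 every edge $(u',v')$ of $G$ between relays $u',v'$ with $u'$ owned by $u$ and $v'$ owned by $v$. Rules $\mathcal{IFR}$: (Relay Introduction) if $u$ has a relay $r$ to $v$ and a relay $s$ to $w$, $u$ may send $s$ to $v$ via $r$. (Relay Fusion) if $u$ has relays $r,r'$ with $\mathrm{same\text{-}target}(r,r')$, $u$ may merge them. (Relay Reversal) if $u$ has relays $r\neq s$ with $\mathrm{incoming}(r)=0$, $u$ may send $s$ via $r$ and then delete $r$. Process rules (on a directed multigraph of processes, where an edge $(u,v)$ means $u$ holds a reference of $v$): Introduction: if $u$ has references of $v$ and $w$ with $v\neq w$, $u$ sends $v$ a reference of $w$ and keeps it (adds edge $(v,w)$). Delegation: if $u$ has references of $v$ and $w$ with $u,v,w$ pairwise distinct, $u$ sends $v$ a reference of $w$ and deletes its reference of $w$ (adds $(v,w)$, removes $(u,w)$). Fusion: if $u$ has two references of the same process, it keeps only one. Reversal: if $u$ has a reference of $v\neq u$, it sends a reference of itself to $v$ and deletes its reference of $v$. *)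

theory Defs
  imports Main "HOL-Library.Multiset"
begin

text \<open>Processes have type 'p (the process set is a set P of that type); relays are
  identified by natural numbers (an unbounded supply of fresh relay names).
  A relay state records the existing relays, their owners, their outgoing connection
  (None = sink relay, whose messages are delivered to its owner; Some t = points to
  relay t) and the buffer of messages in transit at each relay.  A message is a
  reference to a relay (the relay being sent).\<close>

record 'p rstate =
  rels :: "nat set"
  own  :: "nat \<Rightarrow> 'p"
  tgt  :: "nat \<Rightarrow> nat option"
  buf  :: "nat \<Rightarrow> nat multiset"

definition conn :: "'p rstate \<Rightarrow> (nat \<times> nat) set" where
  "conn G = {(r, t). r \<in> rels G \<and> tgt G r = Some t}"

definition wf_rstate :: "'p set \<Rightarrow> 'p rstate \<Rightarrow> bool" where
  "wf_rstate P G \<longleftrightarrow>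
     finite (rels G) \<and>
     (\<forall>r \<in> rels G. own G r \<in> P) \<and>
     (\<forall>r \<in> rels G. \<forall>t. tgt G r = Some t \<longrightarrow> t \<in> rels G) \<and>
     (\<forall>r \<in> rels G. set_mset (buf G r) \<subseteq> rels G) \<and>
     acyclic (conn G)"

inductive reaches_sink :: "'p rstate \<Rightarrow> nat \<Rightarrow> nat \<Rightarrow> bool" for G where
  sink: "r \<in> rels G \<Longrightarrow> tgt G r = None \<Longrightarrow> reaches_sink G r r"
| step: "r \<in> rels G \<Longrightarrow> tgt G r = Some t \<Longrightarrow> reaches_sink G t s \<Longrightarrow> reaches_sink G r s"

definition sink_process :: "'p rstate \<Rightarrow> nat \<Rightarrow> 'p \<Rightarrow> bool" where
  "sink_process G r v \<longleftrightarrow> (\<exists>s. reaches_sink G r s \<and> own G s = v)"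

definition has_relay :: "'p rstate \<Rightarrow> 'p \<Rightarrow> nat \<Rightarrow> 'p \<Rightarrow> bool" where
  "has_relay G u r v \<longleftrightarrow> r \<in> rels G \<and> own G r = u \<and> sink_process G r v"

definition is_sink :: "'p rstate \<Rightarrow> nat \<Rightarrow> bool" where
  "is_sink G r \<longleftrightarrow> tgt G r = None"

definition direct :: "'p rstate \<Rightarrow> nat \<Rightarrow> bool" where
  "direct G r \<longleftrightarrow> (case tgt G r of None \<Rightarrow> True | Some t \<Rightarrow> is_sink G t)"

text \<open>Explicit connections (relays whose
  outgoing connection is r) plus pending references to r in message buffers (implicit
  edges); in a simple relay graph the latter are absent.\<close>
definition incoming :: "'p rstate \<Rightarrow> nat \<Rightarrow> nat" where
  "incoming G r = card {x \<in> rels G. tgt G x = Some r} + (\<Sum>x \<in> rels G. count (buf G x) r)"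

definition same_target :: "'p rstate \<Rightarrow> nat \<Rightarrow> nat \<Rightarrow> bool" where
  "same_target G r r' \<longleftrightarrow> tgt G r = tgt G r'"

definition simple_rg :: "'p set \<Rightarrow> 'p rstate \<Rightarrow> bool" where
  "simple_rg P G \<longleftrightarrow>
     wf_rstate P G \<and>
     (\<forall>r \<in> rels G. buf G r = {#}) \<and>
     (\<forall>r \<in> rels G. direct G r) \<and>
     (\<forall>r \<in> rels G. is_sink G r \<longrightarrow> incoming G r = 1)"

definition CPG :: "'p rstate \<Rightarrow> ('p \<times> 'p) multiset" where
  "CPG G = image_mset (\<lambda>r. (own G r, own G (the (tgt G r))))
                      (mset_set {r \<in> rels G. tgt G r \<noteq> None})"

definition add_relay :: "'p rstate \<Rightarrow> nat \<Rightarrow> 'p \<Rightarrow> nat option \<Rightarrow> 'p rstate" where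
  "add_relay G n u c =
     G\<lparr>rels := insert n (rels G), own := (own G)(n := u), tgt := (tgt G)(n := c),
       buf := (buf G)(n := {#})\<rparr>"

definition enqueue :: "'p rstate \<Rightarrow> nat \<Rightarrow> nat \<Rightarrow> 'p rstate" where
  "enqueue G r m = G\<lparr>buf := (buf G)(r := buf G r + {#m#})\<rparr>"

definition delete_relay :: "'p rstate \<Rightarrow> nat \<Rightarrow> 'p rstate" where
  "delete_relay G r =
     (case tgt G r of
        None \<Rightarrow> G\<lparr>rels := rels G - {r}\<rparr>
      | Some t \<Rightarrow> G\<lparr>rels := rels G - {r}, buf := (buf G)(t := buf G t + buf G r)\<rparr>)"

definition merge_relays :: "'p rstate \<Rightarrow> nat \<Rightarrow> nat \<Rightarrow> 'p rstate" where
  "merge_relays G r r' =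
     G\<lparr>rels := rels G - {r'}, buf := (buf G)(r := buf G r + buf G r')\<rparr>"

text \<open>One step: a rule of IFR applied by a process, or a basic step of the relay
  model (creating a sink relay, forwarding a message in transit, receiving a message).\<close>
inductive ifr_step :: "'p set \<Rightarrow> 'p rstate \<Rightarrow> 'p rstate \<Rightarrow> bool" for P where
  create_sink:
    "u \<in> P \<Longrightarrow> n \<notin> rels G \<Longrightarrow> ifr_step P G (add_relay G n u None)"
| relay_introduction:
    "has_relay G u r v \<Longrightarrow> has_relay G u s w \<Longrightarrow> ifr_step P G (enqueue G r s)"
| relay_fusion:
    "r \<in> rels G \<Longrightarrow> r' \<in> rels G \<Longrightarrow> r \<noteq> r' \<Longrightarrow> own G r = u \<Longrightarrow> own G r' = u \<Longrightarrow>
     same_target G r r' \<Longrightarrow> incoming G r = 0 \<Longrightarrow> incoming G r' = 0 \<Longrightarrow>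
     ifr_step P G (merge_relays G r r')"
| relay_reversal:
    "r \<in> rels G \<Longrightarrow> s \<in> rels G \<Longrightarrow> r \<noteq> s \<Longrightarrow> own G r = u \<Longrightarrow> own G s = u \<Longrightarrow>
     incoming G r = 0 \<Longrightarrow> ifr_step P G (delete_relay (enqueue G r s) r)"
| forward:
    "r \<in> rels G \<Longrightarrow> tgt G r = Some t \<Longrightarrow> m \<in># buf G r \<Longrightarrow>
     ifr_step P G (G\<lparr>buf := (buf G)(r := buf G r - {#m#}, t := buf G t + {#m#})\<rparr>)"
| receive:
    "r \<in> rels G \<Longrightarrow> tgt G r = None \<Longrightarrow> m \<in># buf G r \<Longrightarrow> n \<notin> rels G \<Longrightarrow>
     ifr_step P G (add_relay (G\<lparr>buf := (buf G)(r := buf G r - {#m#})\<rparr>) n (own G r) (Some m))"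

datatype prule = Introduction | Delegation | Fusion | Reversal

text \<open>Process graphs are multisets of directed edges; (u,v) means u holds a reference of v.\<close>
fun proc_step :: "prule \<Rightarrow> ('p \<times> 'p) multiset \<Rightarrow> ('p \<times> 'p) multiset \<Rightarrow> bool" where
  "proc_step Introduction M M' \<longleftrightarrow>
     (\<exists>u v w. (u, v) \<in># M \<and> (u, w) \<in># M \<and> v \<noteq> w \<and> M' = M + {#(v, w)#})"
| "proc_step Delegation M M' \<longleftrightarrow>
     (\<exists>u v w. (u, v) \<in># M \<and> (u, w) \<in># M \<and> u \<noteq> v \<and> v \<noteq> w \<and> u \<noteq> w \<and>
        M' = M - {#(u, w)#} + {#(v, w)#})"
| "proc_step Fusion M M' \<longleftrightarrow>
     (\<exists>u v. count M (u, v) \<ge> 2 \<and> M' = M - {#(u, v)#})"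
| "proc_step Reversal M M' \<longleftrightarrow>
     (\<exists>u v. (u, v) \<in># M \<and> v \<noteq> u \<and> M' = M - {#(u, v)#} + {#(v, u)#})"

end

theory Submission
  imports Defs
begin


lemma img_mset_set_sum:
  "finite A \<Longrightarrow> image_mset f (mset_set A) = (\<Sum>x\<in>A. {#f x#})"
  by (induct A rule: finite_induct) auto

definition NS :: "'p rstate \<Rightarrow> nat set" where
  "NS G = {r \<in> rels G. tgt G r \<noteq> None}"

definition edge :: "'p rstate \<Rightarrow> nat \<Rightarrow> 'p \<times> 'p" where
  "edge G r = (own G r, own G (the (tgt G r)))"

lemma CPG_sum: "finite (rels G) \<Longrightarrow> CPG G = (\<Sum>r\<in>NS G. {#edge G r#})"
  unfolding CPG_def NS_def edge_def by (subst img_mset_set_sum) auto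

lemma mem_sum_single: "finite A \<Longrightarrow> x \<in># (\<Sum>r\<in>A. {#f r#}) \<longleftrightarrow> (\<exists>r\<in>A. f r = x)"
  by (induct A rule: finite_induct) auto

lemma simple_D:
  assumes "simple_rg P G"
  shows "finite (rels G)" "\<And>r. r \<in> rels G \<Longrightarrow> own G r \<in> P"
    "\<And>r. r \<in> rels G \<Longrightarrow> buf G r = {#}"
    "\<And>r t. r \<in> rels G \<Longrightarrow> tgt G r = Some t \<Longrightarrow> t \<in> rels G \<and> tgt G t = None"
    "\<And>t. t \<in> rels G \<Longrightarrow> tgt G t = None \<Longrightarrow> card {x \<in> rels G. tgt G x = Some t} = 1"
proof -
  have W: "wf_rstate P G" and B: "\<forall>r \<in> rels G. buf G r = {#}"
    and Di: "\<forall>r \<in> rels G. direct G r" and I: "\<forall>r \<in> rels G. is_sink G r \<longrightarrow> incoming G r = 1"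
    using assms unfolding simple_rg_def by blast+
  show "finite (rels G)" "\<And>r. r \<in> rels G \<Longrightarrow> own G r \<in> P"
    using W unfolding wf_rstate_def by blast+
  show B': "\<And>r. r \<in> rels G \<Longrightarrow> buf G r = {#}" using B by blast
  show "t \<in> rels G \<and> tgt G t = None" if "r \<in> rels G" "tgt G r = Some t" for r t
  proof
    show "t \<in> rels G" using W that unfolding wf_rstate_def by blast
    have "direct G r" using Di that(1) by blast
    then show "tgt G t = None" using that(2) by (simp add: direct_def is_sink_def)
  qed
  fix t assume t: "t \<in> rels G" "tgt G t = None"
  then have "incoming G t = 1" using I by (simp add: is_sink_def)
  moreover have "(\<Sum>x \<in> rels G. count (buf G x) t) = 0" using B' by simp
  ultimately show "card {x \<in> rels G. tgt G x = Some t} = 1" by (simp add: incoming_def)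
qed

lemma simple_I:
  assumes "finite (rels G)" "\<And>r. r \<in> rels G \<Longrightarrow> own G r \<in> P"
    "\<And>r. r \<in> rels G \<Longrightarrow> buf G r = {#}"
    "\<And>r t. r \<in> rels G \<Longrightarrow> tgt G r = Some t \<Longrightarrow> t \<in> rels G \<and> tgt G t = None"
    "\<And>t. t \<in> rels G \<Longrightarrow> tgt G t = None \<Longrightarrow> card {x \<in> rels G. tgt G x = Some t} = 1"
  shows "simple_rg P G"
proof -
  have tr: "(a, b) \<in> conn G" if "(a, b) \<in> (conn G)\<^sup>+" for a b
    using that
  proof (induct rule: trancl_induct)
    case (base y) then show ?case .
  next
    case (step y z)
    have "tgt G y = None" using step(3) assms(4) unfolding conn_def by blast
    moreover have "tgt G y = Some z" using step(2) unfolding conn_def by blast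
    ultimately show ?case by simp
  qed
  have ac: "acyclic (conn G)"
    unfolding acyclic_def
  proof
    fix x show "(x, x) \<notin> (conn G)\<^sup>+"
    proof
      assume "(x, x) \<in> (conn G)\<^sup>+"
      then have "(x, x) \<in> conn G" by (rule tr)
      then have "x \<in> rels G" "tgt G x = Some x" unfolding conn_def by blast+
      then show False using assms(4)[of x x] by simp
    qed
  qed
  have wf: "wf_rstate P G"
    unfolding wf_rstate_def
  proof (intro conjI ballI allI impI)
    show "finite (rels G)" by (rule assms(1))
    show "own G r \<in> P" if "r \<in> rels G" for r using assms(2) that .
    show "t \<in> rels G" if "r \<in> rels G" "tgt G r = Some t" for r t using assms(4)[OF that] by simp
    show "set_mset (buf G r) \<subseteq> rels G" if "r \<in> rels G" for r using assms(3)[OF that] by simp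
    show "acyclic (conn G)" by (rule ac)
  qed
  have dir: "\<forall>r \<in> rels G. direct G r"
  proof
    fix r assume "r \<in> rels G"
    show "direct G r"
    proof (cases "tgt G r")
      case None then show ?thesis by (simp add: direct_def)
    next
      case (Some t)
      then have "tgt G t = None" using assms(4)[OF \<open>r \<in> rels G\<close>] by simp
      then show ?thesis using Some by (simp add: direct_def is_sink_def)
    qed
  qed
  have inc: "\<forall>r \<in> rels G. is_sink G r \<longrightarrow> incoming G r = 1"
  proof (intro ballI impI)
    fix r assume "r \<in> rels G" "is_sink G r"
    then have "card {x \<in> rels G. tgt G x = Some r} = 1" using assms(5) by (simp add: is_sink_def)
    moreover have "(\<Sum>x \<in> rels G. count (buf G x) r) = 0" using assms(3) by simp
    ultimately show "incoming G r = 1" by (simp add: incoming_def)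
  qed
  show ?thesis unfolding simple_rg_def using wf assms(3) dir inc by blast
qed

lemma simple_unique:
  assumes "simple_rg P G" "x \<in> rels G" "x' \<in> rels G" "tgt G x = Some t" "tgt G x' = Some t"
  shows "x = x'"
proof -
  have "t \<in> rels G \<and> tgt G t = None" using simple_D(4)[OF assms(1) assms(2) assms(4)] .
  then have "card {x \<in> rels G. tgt G x = Some t} = 1" using simple_D(5)[OF assms(1)] by blast
  then obtain a where a: "{x \<in> rels G. tgt G x = Some t} = {a}" by (rule card_1_singletonE)
  have "x \<in> {x \<in> rels G. tgt G x = Some t}" "x' \<in> {x \<in> rels G. tgt G x = Some t}"
    using assms by blast+
  then show ?thesis unfolding a by blast
qed

lemma incoming_simple:
  assumes "\<And>x. x \<in> rels G \<Longrightarrow> count (buf G x) r = 0"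
  shows "incoming G r = card {x \<in> rels G. tgt G x = Some r}"
  using assms by (simp add: incoming_def)


lemma simple_pre:
  assumes S: "simple_rg P G" and "r \<in> rels G" "tgt G r = Some t"
  shows "{x \<in> rels G. tgt G x = Some t} = {r}"
  using simple_unique[OF S _ assms(2) _ assms(3)] assms(2,3) by blast

lemma simple_noinc:
  assumes S: "simple_rg P G" and "r \<in> rels G" "tgt G r = Some t"
  shows "{x \<in> rels G. tgt G x = Some r} = {}"
proof -
  have "False" if "x \<in> rels G" "tgt G x = Some r" for x
  proof -
    have "tgt G r = None" using simple_D(4)[OF S that] by blast
    then show False using assms(3) by simp
  qed
  then show ?thesis by blast
qed

lemma simple_notgt:
  assumes S: "simple_rg P G" and "q \<notin> rels G"
  shows "{x \<in> rels G. tgt G x = Some q} = {}"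
  using simple_D(4)[OF S] assms(2) by blast

lemma incoming_zero:
  assumes "{x \<in> rels G. tgt G x = Some r} = {}" "\<And>x. x \<in> rels G \<Longrightarrow> count (buf G x) r = 0"
  shows "incoming G r = 0"
  unfolding incoming_def assms(1) using assms(2) by simp

lemma CPG_remove:
  assumes "finite (rels G)" "r \<in> rels G" "tgt G r = Some t"
  shows "CPG G = {#edge G r#} + (\<Sum>x\<in>NS G - {r}. {#edge G x#})"
proof -
  have "finite (NS G)" "r \<in> NS G" using assms by (auto simp: NS_def)
  then show ?thesis unfolding CPG_sum[OF assms(1)] by (rule sum.remove)
qed



lemma nonsink_noinc:
  assumes S: "simple_rg P G" and "r \<in> rels G" "tgt G r = Some t"
  shows "incoming G r = 0"
  by (rule incoming_zero[OF simple_noinc[OF S assms(2,3)]]) (simp add: simple_D(3)[OF S])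

lemma delete_pair:
  assumes S: "simple_rg P G" and r: "r2 \<in> rels G" "tgt G r2 = Some t2"
    "s1 \<in> rels G" "s1 \<noteq> r2" "own G s1 = own G r2" "s1 \<noteq> t2"
    "s2 \<in> rels G" "s2 \<noteq> t2" "s2 \<noteq> r2" "own G s2 = own G t2"
  shows "\<exists>G'. (ifr_step P)\<^sup>*\<^sup>* G G' \<and> simple_rg P G' \<and> CPG G' = CPG G - {#edge G r2#}"
proof -
  note D = simple_D[OF S]
  have t: "t2 \<in> rels G" "tgt G t2 = None"
    using D(4)[OF r(1) r(2)] by auto
  have rt: "r2 \<noteq> t2" using r t by auto
  define G1 where "G1 = delete_relay (enqueue G r2 s1) r2"
  have s1: "ifr_step P G G1" unfolding G1_def
    by (rule relay_reversal[OF r(1) r(3) r(4)[symmetric] refl r(5)])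
       (rule nonsink_noinc[OF S r(1) r(2)])
  have G1: "rels G1 = rels G - {r2}" "own G1 = own G" "tgt G1 = tgt G"
     "buf G1 = (buf G)(r2 := {#s1#}, t2 := {#s1#})"
    using rt t r D(3) by (auto simp: G1_def delete_relay_def enqueue_def)
  define G2 where "G2 = delete_relay (enqueue G1 t2 s2) t2"
  have inc: "incoming G1 t2 = 0"
  proof -
    have "{x \<in> rels G1. tgt G1 x = Some t2} = {}"
      using G1 simple_unique[OF S _ r(1) _ r(2)] by auto
    moreover have "count (buf G1 x) t2 = 0" if "x \<in> rels G1" for x
      using that G1 D(3) r by auto
    ultimately show ?thesis by (rule incoming_zero)
  qed
  have s2: "ifr_step P G1 G2" unfolding G2_def
  proof (rule relay_reversal[OF _ _ r(8)[symmetric] refl _ inc])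
    show "t2 \<in> rels G1" using G1(1) t(1) rt by simp
    show "s2 \<in> rels G1" using G1(1) r(7) r(9) by simp
    show "own G1 s2 = own G1 t2" using G1(2) r(10) by simp
  qed
  have G2: "rels G2 = rels G - {r2, t2}" "own G2 = own G" "tgt G2 = tgt G"
    "\<And>z. z \<in> rels G2 \<Longrightarrow> buf G2 z = {#}"
    using G1 t D(3) by (auto simp: G2_def delete_relay_def enqueue_def)
  have fin: "finite (rels G2)" using G2 D(1) by auto
  have simp2: "simple_rg P G2"
  proof (rule simple_I[OF fin])
    show "own G2 r \<in> P" if "r \<in> rels G2" for r using that G2 D(2) by auto
    show "buf G2 r = {#}" if "r \<in> rels G2" for r using that G2 by auto
    show "t \<in> rels G2 \<and> tgt G2 t = None" if "x \<in> rels G2" "tgt G2 x = Some t" for x t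
    proof -
      have x: "x \<in> rels G" "x \<noteq> r2" using that(1) G2(1) by auto
      have tx: "tgt G x = Some t" using that(2) G2(3) by simp
      have tt: "t \<in> rels G \<and> tgt G t = None" using D(4)[OF x(1) tx] .
      have "t \<noteq> t2"
      proof
        assume "t = t2"
        then have "x = r2" using simple_unique[OF S x(1) r(1)] tx r(2) by simp
        then show False using x(2) by simp
      qed
      moreover have "t \<noteq> r2" using tt r(2) by auto
      ultimately show ?thesis using tt G2(1,3) by simp
    qed
    show "card {x \<in> rels G2. tgt G2 x = Some t} = 1" if "t \<in> rels G2" "tgt G2 t = None" for t
    proof -
      have "{x \<in> rels G2. tgt G2 x = Some t} = {x \<in> rels G. tgt G x = Some t}"
        using that(1) G2(1,3) r(2) t(2) by fastforce
      moreover have "t \<in> rels G" "tgt G t = None" using that G2 by auto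
      ultimately show ?thesis using D(5)[of t] by simp
    qed
  qed
  have ns: "NS G2 = NS G - {r2}" unfolding NS_def G2(1) G2(3) using t(2) r(2) by fastforce
  have "CPG G2 = (\<Sum>r\<in>NS G - {r2}. {#edge G r#})"
    using CPG_sum[OF fin] ns G2 by (simp add: edge_def)
  moreover have "CPG G = {#edge G r2#} + (\<Sum>r\<in>NS G - {r2}. {#edge G r#})"
    by (rule CPG_remove[OF D(1) r(1) r(2)])
  ultimately have "CPG G2 = CPG G - {#edge G r2#}" by simp
  then show ?thesis using s1 s2 simp2 by (meson rtranclp.rtrancl_into_rtrancl rtranclp.rtrancl_refl)
qed



lemma reversal_case:
  assumes S: "simple_rg P G" and r: "r \<in> rels G" "tgt G r = Some t"
    and fr: "n \<notin> rels G" "n' \<notin> rels G" "n \<noteq> n'"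
  shows "\<exists>G'. (ifr_step P)\<^sup>*\<^sup>* G G' \<and> simple_rg P G' \<and>
     CPG G' = CPG G - {#edge G r#} + {#(own G t, own G r)#}"
proof -
  note D = simple_D[OF S]
  have t: "t \<in> rels G" "tgt G t = None" using D(4)[OF r(1) r(2)] by auto
  have rt: "r \<noteq> t" "n \<noteq> r" "n \<noteq> t" "n' \<noteq> r" "n' \<noteq> t" using r t fr by auto
  define u where "u = own G r"
  define v where "v = own G t"
  have uP: "u \<in> P" using D(2)[OF r(1)] by (simp add: u_def)
  define G1 where "G1 = add_relay G n u None"
  have s1: "ifr_step P G G1" unfolding G1_def
    by (rule create_sink[OF uP fr(1)])
  have G1: "rels G1 = insert n (rels G)" "own G1 = (own G)(n := u)" "tgt G1 = (tgt G)(n := None)"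
     "buf G1 = (buf G)(n := {#})"
    by (simp_all add: G1_def add_relay_def)
  define G2 where "G2 = delete_relay (enqueue G1 r n) r"
  have inc1: "incoming G1 r = 0"
  proof -
    have "{x \<in> rels G1. tgt G1 x = Some r} = {}"
      unfolding G1(1) G1(3) using simple_noinc[OF S r(1) r(2)] by auto
    moreover have "count (buf G1 x) r = 0" if "x \<in> rels G1" for x
    proof -
      have "buf G1 x = {#}" using that D(3)[of x] unfolding G1(1) G1(4) by (cases "x = n") auto
      then show ?thesis by simp
    qed
    ultimately show ?thesis by (rule incoming_zero)
  qed
  have s2: "ifr_step P G1 G2" unfolding G2_def
  proof (rule relay_reversal[OF _ _ rt(2)[symmetric] refl _ inc1])
    show "r \<in> rels G1" using r(1) G1(1) by simp
    show "n \<in> rels G1" using G1(1) by simp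
    show "own G1 n = own G1 r" using G1(2) rt by (simp add: u_def)
  qed
  have G2: "rels G2 = insert n (rels G) - {r}" "own G2 = (own G)(n := u)" "tgt G2 = (tgt G)(n := None)"
     "buf G2 = (buf G)(n := {#}, r := {#n#}, t := {#n#})"
  proof -
    have tr: "tgt (enqueue G1 r n) r = Some t" using G1(3) r(2) rt by (simp add: enqueue_def)
    have "G2 = (enqueue G1 r n)\<lparr>rels := rels (enqueue G1 r n) - {r},
        buf := (buf (enqueue G1 r n))(t := buf (enqueue G1 r n) t + buf (enqueue G1 r n) r)\<rparr>"
      unfolding G2_def delete_relay_def tr by simp
    then show "rels G2 = insert n (rels G) - {r}" "own G2 = (own G)(n := u)" "tgt G2 = (tgt G)(n := None)"
      "buf G2 = (buf G)(n := {#}, r := {#n#}, t := {#n#})"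
      using G1 rt D(3)[OF r(1)] D(3)[OF t(1)] by (simp_all add: enqueue_def fun_eq_iff)
  qed
  define G3 where "G3 = add_relay (G2\<lparr>buf := (buf G2)(t := buf G2 t - {#n#})\<rparr>) n' (own G2 t) (Some n)"
  have s3: "ifr_step P G2 G3" unfolding G3_def
  proof (rule receive)
    show "t \<in> rels G2" using G2(1) t(1) rt by simp
    show "tgt G2 t = None" using G2(3) t(2) by simp
    show "n \<in># buf G2 t" using G2(4) by simp
    show "n' \<notin> rels G2" using G2(1) fr by simp
  qed
  have G3: "rels G3 = insert n' (insert n (rels G) - {r})" "own G3 = (own G)(n := u, n' := v)"
    "tgt G3 = (tgt G)(n := None, n' := Some n)"
    "buf G3 = (buf G)(n := {#}, r := {#n#}, t := {#}, n' := {#})"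
    using G2 rt fr by (simp_all add: G3_def add_relay_def v_def fun_eq_iff)
  define G4 where "G4 = delete_relay (enqueue G3 t n') t"
  have inc3: "incoming G3 t = 0"
  proof -
    have "{x \<in> rels G3. tgt G3 x = Some t} = {}"
      unfolding G3(1) G3(3) using simple_pre[OF S r(1) r(2)] rt fr by auto
    moreover have "count (buf G3 x) t = 0" if "x \<in> rels G3" for x
    proof -
      have "x \<noteq> r" "x = n \<or> x = n' \<or> x \<in> rels G" using that G3(1) rt by auto
      then have "buf G3 x = {#}" using D(3)[of x] unfolding G3(4) by auto
      then show ?thesis by simp
    qed
    ultimately show ?thesis by (rule incoming_zero)
  qed
  have s4: "ifr_step P G3 G4" unfolding G4_def
  proof (rule relay_reversal[OF _ _ rt(5)[symmetric] refl _ inc3])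
    show "t \<in> rels G3" using G3(1) t(1) rt by simp
    show "n' \<in> rels G3" using G3(1) by simp
    show "own G3 n' = own G3 t" using G3(2) rt fr by (simp add: v_def)
  qed
  have G4: "rels G4 = insert n' (insert n (rels G - {r, t}))" "own G4 = (own G)(n := u, n' := v)"
    "tgt G4 = (tgt G)(n := None, n' := Some n)"
    "\<And>z. z \<in> rels G4 \<Longrightarrow> buf G4 z = {#}"
  proof -
    have tt: "tgt (enqueue G3 t n') t = None" using G3(3) t(2) rt by (simp add: enqueue_def)
    have e: "G4 = (enqueue G3 t n')\<lparr>rels := rels (enqueue G3 t n') - {t}\<rparr>"
      unfolding G4_def delete_relay_def tt by simp
    have f: "rels G4 = rels G3 - {t}" "own G4 = own G3" "tgt G4 = tgt G3"
      "buf G4 = (buf G3)(t := buf G3 t + {#n'#})"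
      unfolding e by (simp_all add: enqueue_def)
    show "rels G4 = insert n' (insert n (rels G - {r, t}))" unfolding f(1) G3(1) using rt fr
      by auto
    show "own G4 = (own G)(n := u, n' := v)" "tgt G4 = (tgt G)(n := None, n' := Some n)"
      unfolding f G3 by simp_all
    fix z assume z: "z \<in> rels G4"
    then have "z \<noteq> t" "z \<noteq> r" "z = n \<or> z = n' \<or> z \<in> rels G" unfolding f(1) G3(1) using rt by auto
    then show "buf G4 z = {#}" unfolding f(4) G3(4) using D(3)[of z] by auto
  qed
  have fin: "finite (rels G4)" using G4(1) D(1) by simp
  have simp4: "simple_rg P G4"
  proof (rule simple_I[OF fin])
    show "own G4 x \<in> P" if "x \<in> rels G4" for x
    proof -
      have "x = n \<or> x = n' \<or> x \<in> rels G" using that G4(1) by auto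
      then show ?thesis using G4(2) D(2)[of x] uP D(2)[OF t(1)] by (auto simp: v_def)
    qed
    show "buf G4 x = {#}" if "x \<in> rels G4" for x using that G4(4) by blast
    show "t' \<in> rels G4 \<and> tgt G4 t' = None" if xa: "x \<in> rels G4" "tgt G4 x = Some t'" for x t'
    proof -
      consider "x = n" | "x = n'" | "x \<in> rels G" "x \<noteq> r" "x \<noteq> t" "x \<noteq> n" "x \<noteq> n'"
        using xa(1) unfolding G4(1) by blast
      then show ?thesis
      proof cases
        case 1 then show ?thesis using xa(2) G4(3) fr(3) by simp
      next
        case 2 then show ?thesis using xa(2) G4(3) G4(1) fr by simp
      next
        case 3
        have tx: "tgt G x = Some t'" using xa(2) G4(3) 3 by simp
        have tt: "t' \<in> rels G \<and> tgt G t' = None" using D(4)[OF 3(1) tx] .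
        have "t' \<noteq> t"
        proof
          assume "t' = t"
          then have "x = r" using simple_unique[OF S 3(1) r(1)] tx r(2) by simp
          then show False using 3 by simp
        qed
        moreover have "t' \<noteq> r" using tt r(2) by auto
        moreover have "t' \<noteq> n" "t' \<noteq> n'" using tt fr by auto
        ultimately show ?thesis using tt G4(1,3) by simp
      qed
    qed
    show "card {x \<in> rels G4. tgt G4 x = Some t'} = 1" if "t' \<in> rels G4" "tgt G4 t' = None" for t'
    proof (cases "t' = n")
      case True
      have "{x \<in> rels G4. tgt G4 x = Some t'} = {n'}"
        unfolding G4(1) G4(3) True using simple_notgt[OF S fr(1)] rt fr by auto
      then show ?thesis by simp
    next
      case False
      have "t' \<noteq> n'"
      proof
        assume "t' = n'"
        then have "tgt G4 t' = Some n" using G4(3) by simp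
        then show False using that(2) by simp
      qed
      then have t'G: "t' \<in> rels G" "t' \<noteq> r" "t' \<noteq> t" "t' \<noteq> n'" using that(1) False unfolding G4(1) by blast+
      have t'N: "tgt G t' = None" using that(2) G4(3) False t'G by simp
      have "{x \<in> rels G4. tgt G4 x = Some t'} = {x \<in> rels G. tgt G x = Some t'}"
        unfolding G4(1) G4(3) using False t'G r(2) t(2) fr by auto
      then show ?thesis using D(5)[OF t'G(1) t'N] by simp
    qed
  qed
  have ns: "NS G4 = insert n' (NS G - {r})"
    unfolding NS_def G4(1) G4(3) using t(2) r(2) fr by auto
  have fNS: "finite (NS G - {r})" using D(1) by (simp add: NS_def)
  have n'NS: "n' \<notin> NS G - {r}" using fr by (simp add: NS_def)
  have "CPG G4 = {#edge G4 n'#} + (\<Sum>x\<in>NS G - {r}. {#edge G4 x#})"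
    unfolding CPG_sum[OF fin] ns sum.insert[OF fNS n'NS] by simp
  also have "(\<Sum>x\<in>NS G - {r}. {#edge G4 x#}) = (\<Sum>x\<in>NS G - {r}. {#edge G x#})"
  proof (rule sum.cong)
    fix x assume x: "x \<in> NS G - {r}"
    then obtain q where q: "x \<in> rels G" "tgt G x = Some q" by (auto simp: NS_def)
    have "q \<in> rels G" using D(4)[OF q] by blast
    then have "x \<noteq> n" "x \<noteq> n'" "q \<noteq> n" "q \<noteq> n'" using q fr by auto
    then show "{#edge G4 x#} = {#edge G x#}" using q G4(2,3) by (simp add: edge_def)
  qed simp
  also have "edge G4 n' = (own G t, own G r)" using G4 fr by (simp add: edge_def u_def v_def)
  finally have A: "CPG G4 = {#(own G t, own G r)#} + (\<Sum>x\<in>NS G - {r}. {#edge G x#})" .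
  have "CPG G = {#edge G r#} + (\<Sum>x\<in>NS G - {r}. {#edge G x#})"
    by (rule CPG_remove[OF D(1) r(1) r(2)])
  with A have "CPG G4 = CPG G - {#edge G r#} + {#(own G t, own G r)#}" by simp
  moreover have "(ifr_step P)\<^sup>*\<^sup>* G G4" using s1 s2 s3 s4
    by (meson rtranclp.rtrancl_into_rtrancl rtranclp.rtrancl_refl)
  ultimately show ?thesis using simp4 by blast
qed



lemma has_relay_direct:
  "r \<in> rels G \<Longrightarrow> tgt G r = Some t \<Longrightarrow> t \<in> rels G \<Longrightarrow> tgt G t = None \<Longrightarrow>
   has_relay G (own G r) r (own G t)"
  unfolding has_relay_def sink_process_def
  by (blast intro: reaches_sink.intros)

lemma has_relay_sink:
  "r \<in> rels G \<Longrightarrow> tgt G r = None \<Longrightarrow> has_relay G (own G r) r (own G r)"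
  unfolding has_relay_def sink_process_def
  by (blast intro: reaches_sink.intros)

lemma has_relay_2:
  "b \<in> rels G \<Longrightarrow> tgt G b = Some r \<Longrightarrow> r \<in> rels G \<Longrightarrow> tgt G r = Some t \<Longrightarrow> t \<in> rels G \<Longrightarrow> tgt G t = None \<Longrightarrow>
   has_relay G (own G b) b (own G t)"
  unfolding has_relay_def sink_process_def
  by (blast intro: reaches_sink.intros)

lemma intro_case:
  assumes S: "simple_rg P G" and r: "r1 \<in> rels G" "r2 \<in> rels G"
    "tgt G r1 = Some t1" "tgt G r2 = Some t2" "own G r1 = own G r2" "t1 \<noteq> t2"
    and fr: "b \<notin> rels G" "y \<notin> rels G" "x \<notin> rels G" "x' \<notin> rels G"
       "b \<noteq> y" "b \<noteq> x" "b \<noteq> x'" "y \<noteq> x" "y \<noteq> x'" "x \<noteq> x'"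
  shows "\<exists>G'. (ifr_step P)\<^sup>*\<^sup>* G G' \<and> simple_rg P G' \<and>
     CPG G' = CPG G + {#(own G t1, own G t2)#} \<and> rels G' = insert x (insert y (rels G)) \<and>
     (\<forall>z\<in>rels G. own G' z = own G z \<and> tgt G' z = tgt G z) \<and> own G' y = own G t2 \<and> tgt G' y = None"
proof -
  note D = simple_D[OF S]
  have t: "t1 \<in> rels G" "tgt G t1 = None" "t2 \<in> rels G" "tgt G t2 = None"
    using D(4)[OF r(1) r(3)] D(4)[OF r(2) r(4)] by auto
  have dist: "r1 \<noteq> r2" "r1 \<noteq> t1" "r1 \<noteq> t2" "r2 \<noteq> t1" "r2 \<noteq> t2"
    using r t by auto
  have fd: "b \<noteq> r1" "b \<noteq> r2" "b \<noteq> t1" "b \<noteq> t2" "y \<noteq> r1" "y \<noteq> r2" "y \<noteq> t1" "y \<noteq> t2"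
     "x \<noteq> r1" "x \<noteq> r2" "x \<noteq> t1" "x \<noteq> t2" "x' \<noteq> r1" "x' \<noteq> r2" "x' \<noteq> t1" "x' \<noteq> t2"
    using fr r t by auto
  have frs: "y \<noteq> b" "x \<noteq> b" "x' \<noteq> b" "x \<noteq> y" "x' \<noteq> y" "x' \<noteq> x" using fr by auto
  have fds: "r1 \<noteq> b" "r2 \<noteq> b" "t1 \<noteq> b" "t2 \<noteq> b" "r1 \<noteq> y" "r2 \<noteq> y" "t1 \<noteq> y" "t2 \<noteq> y"
     "r1 \<noteq> x" "r2 \<noteq> x" "t1 \<noteq> x" "t2 \<noteq> x" "r1 \<noteq> x'" "r2 \<noteq> x'" "t1 \<noteq> x'" "t2 \<noteq> x'"
    using fd by auto
  have dists: "r2 \<noteq> r1" "t1 \<noteq> r1" "t2 \<noteq> r1" "t1 \<noteq> r2" "t2 \<noteq> r2" using dist by auto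
  note fr = fr frs
  note fd = fd fds
  note dist = dist dists
  define u where "u = own G r1"
  define v where "v = own G t1"
  define w where "w = own G t2"
  have wP: "w \<in> P" using D(2)[OF t(3)] by (simp add: w_def)
  have vP: "v \<in> P" using D(2)[OF t(1)] by (simp add: v_def)
  note B = D(3)[OF r(1)] D(3)[OF r(2)] D(3)[OF t(1)] D(3)[OF t(3)]

  define G1 where "G1 = enqueue G r2 r1"
  have s1: "ifr_step P G G1" unfolding G1_def
    by (rule relay_introduction[OF has_relay_direct[OF r(2) r(4) t(3,4)]])
       (use has_relay_direct[OF r(1) r(3) t(1,2)] r(5) in simp)
  have G1: "rels G1 = rels G" "own G1 = own G" "tgt G1 = tgt G" "buf G1 = (buf G)(r2 := {#r1#})"
    using B by (simp_all add: G1_def enqueue_def)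
  define G2 where "G2 = G1\<lparr>buf := (buf G1)(r2 := buf G1 r2 - {#r1#}, t2 := buf G1 t2 + {#r1#})\<rparr>"
  have s2: "ifr_step P G1 G2" unfolding G2_def
    by (rule forward) (simp_all add: G1 r(2) r(4))
  have G2: "rels G2 = rels G" "own G2 = own G" "tgt G2 = tgt G" "buf G2 = (buf G)(r2 := {#}, t2 := {#r1#})"
    using G1 B dist by (simp_all add: G2_def)
  define G3 where "G3 = add_relay (G2\<lparr>buf := (buf G2)(t2 := buf G2 t2 - {#r1#})\<rparr>) b (own G2 t2) (Some r1)"
  have s3: "ifr_step P G2 G3" unfolding G3_def
    by (rule receive) (simp_all add: G2 t fr)
  have G3: "rels G3 = insert b (rels G)" "own G3 = (own G)(b := w)" "tgt G3 = (tgt G)(b := Some r1)"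
     "buf G3 = (buf G)(r2 := {#}, t2 := {#}, b := {#})"
    using G2 by (simp_all add: G3_def add_relay_def w_def)
  define G4 where "G4 = add_relay G3 y w None"
  have s4: "ifr_step P G3 G4" unfolding G4_def
    by (rule create_sink) (simp_all add: G3 wP fr fd)
  have G4: "rels G4 = insert y (insert b (rels G))" "own G4 = (own G)(b := w, y := w)"
     "tgt G4 = (tgt G)(b := Some r1, y := None)"
     "buf G4 = (buf G)(r2 := {#}, t2 := {#}, b := {#}, y := {#})"
    using G3 by (simp_all add: G4_def add_relay_def fun_eq_iff)
  define G5 where "G5 = enqueue G4 b y"
  have hb: "has_relay G4 w b v"
    using has_relay_2[of b G4 r1 t1] G4 r t fd fr by (simp add: v_def)
  have hy: "has_relay G4 w y w"
    using has_relay_sink[of y G4] G4 fr by simp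
  have s5: "ifr_step P G4 G5" unfolding G5_def by (rule relay_introduction[OF hb hy])
  have G5: "rels G5 = insert y (insert b (rels G))" "own G5 = (own G)(b := w, y := w)"
     "tgt G5 = (tgt G)(b := Some r1, y := None)"
     "buf G5 = (buf G)(r2 := {#}, t2 := {#}, b := {#y#}, y := {#})"
    using G4 fr by (simp_all add: G5_def enqueue_def fun_eq_iff)
  define G6 where "G6 = G5\<lparr>buf := (buf G5)(b := buf G5 b - {#y#}, r1 := buf G5 r1 + {#y#})\<rparr>"
  have s6: "ifr_step P G5 G6" unfolding G6_def
    by (rule forward) (simp_all add: G5 fr)
  have G6: "rels G6 = insert y (insert b (rels G))" "own G6 = (own G)(b := w, y := w)"
     "tgt G6 = (tgt G)(b := Some r1, y := None)"
     "buf G6 = (buf G)(r2 := {#}, t2 := {#}, b := {#}, y := {#}, r1 := {#y#})"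
    using G5 fr fd B by (simp_all add: G6_def fun_eq_iff)
  define G7 where "G7 = G6\<lparr>buf := (buf G6)(r1 := buf G6 r1 - {#y#}, t1 := buf G6 t1 + {#y#})\<rparr>"
  have s7: "ifr_step P G6 G7" unfolding G7_def
    by (rule forward) (simp_all add: G6 fd dist r(1) r(3))
  have G7: "rels G7 = insert y (insert b (rels G))" "own G7 = (own G)(b := w, y := w)"
     "tgt G7 = (tgt G)(b := Some r1, y := None)"
     "buf G7 = (buf G)(r2 := {#}, t2 := {#}, b := {#}, y := {#}, r1 := {#}, t1 := {#y#})"
    using G6 fr fd B dist by (simp_all add: G7_def fun_eq_iff)
  define G8 where "G8 = add_relay (G7\<lparr>buf := (buf G7)(t1 := buf G7 t1 - {#y#})\<rparr>) x (own G7 t1) (Some y)"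
  have s8: "ifr_step P G7 G8" unfolding G8_def
    by (rule receive) (simp_all add: G7 t fr fd)
  have G8: "rels G8 = insert x (insert y (insert b (rels G)))" "own G8 = (own G)(b := w, y := w, x := v)"
     "tgt G8 = (tgt G)(b := Some r1, y := None, x := Some y)"
     "buf G8 = (buf G)(r2 := {#}, t2 := {#}, b := {#}, y := {#}, r1 := {#}, t1 := {#}, x := {#})"
    using G7 fr fd by (simp_all add: G8_def add_relay_def v_def fun_eq_iff)
  have bufE8: "buf G8 z = {#}" if "z \<in> rels G8" for z
    using that D(3)[of z] unfolding G8(1) G8(4) by auto
  define G9 where "G9 = delete_relay (enqueue G8 b y) b"
  have inc8: "incoming G8 b = 0"
  proof (rule incoming_zero)
    show "{z \<in> rels G8. tgt G8 z = Some b} = {}"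
      unfolding G8(1) G8(3) using simple_notgt[OF S fr(1)] fr fd by auto
    show "count (buf G8 z) b = 0" if "z \<in> rels G8" for z using bufE8[OF that] by simp
  qed
  have s9: "ifr_step P G8 G9" unfolding G9_def
  proof (rule relay_reversal[OF _ _ fr(5) refl _ inc8])
    show "b \<in> rels G8" "y \<in> rels G8" using G8(1) by simp_all
    show "own G8 y = own G8 b" using G8(2) fr fd by simp
  qed
  have G9: "rels G9 = insert x (insert y (rels G))" "own G9 = (own G)(b := w, y := w, x := v)"
     "tgt G9 = (tgt G)(b := Some r1, y := None, x := Some y)"
     "buf G9 = (buf G)(r2 := {#}, t2 := {#}, b := {#y#}, y := {#}, r1 := {#y#}, t1 := {#}, x := {#})"
  proof -
    have tb: "tgt (enqueue G8 b y) b = Some r1" using G8(3) fr fd by (simp add: enqueue_def)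
    have e: "G9 = (enqueue G8 b y)\<lparr>rels := rels (enqueue G8 b y) - {b},
        buf := (buf (enqueue G8 b y))(r1 := buf (enqueue G8 b y) r1 + buf (enqueue G8 b y) b)\<rparr>"
      unfolding G9_def delete_relay_def tb by simp
    show "rels G9 = insert x (insert y (rels G))" unfolding e using G8(1) fr fd by (auto simp: enqueue_def)
    show "own G9 = (own G)(b := w, y := w, x := v)" "tgt G9 = (tgt G)(b := Some r1, y := None, x := Some y)"
      unfolding e using G8 by (simp_all add: enqueue_def)
    show "buf G9 = (buf G)(r2 := {#}, t2 := {#}, b := {#y#}, y := {#}, r1 := {#y#}, t1 := {#}, x := {#})"
      unfolding e using G8(4) fr fd dist by (simp add: enqueue_def fun_eq_iff)
  qed
  define G10 where "G10 = G9\<lparr>buf := (buf G9)(r1 := buf G9 r1 - {#y#}, t1 := buf G9 t1 + {#y#})\<rparr>"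
  have s10: "ifr_step P G9 G10" unfolding G10_def
    by (rule forward) (simp_all add: G9 fd dist r(1) r(3))
  have G10: "rels G10 = insert x (insert y (rels G))" "own G10 = (own G)(b := w, y := w, x := v)"
     "tgt G10 = (tgt G)(b := Some r1, y := None, x := Some y)"
     "buf G10 = (buf G)(r2 := {#}, t2 := {#}, b := {#y#}, y := {#}, r1 := {#}, t1 := {#y#}, x := {#})"
    using G9 fr fd dist by (simp_all add: G10_def fun_eq_iff)
  define G11 where "G11 = add_relay (G10\<lparr>buf := (buf G10)(t1 := buf G10 t1 - {#y#})\<rparr>) x' (own G10 t1) (Some y)"
  have s11: "ifr_step P G10 G11" unfolding G11_def
    by (rule receive) (simp_all add: G10 t fr fd)
  have G11: "rels G11 = insert x' (insert x (insert y (rels G)))"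
     "own G11 = (own G)(b := w, y := w, x := v, x' := v)"
     "tgt G11 = (tgt G)(b := Some r1, y := None, x := Some y, x' := Some y)"
     "buf G11 = (buf G)(r2 := {#}, t2 := {#}, b := {#y#}, y := {#}, r1 := {#}, t1 := {#}, x := {#}, x' := {#})"
    using G10 fr fd by (simp_all add: G11_def add_relay_def v_def fun_eq_iff)
  have inc11: "incoming G11 z = 0" if z: "z = x \<or> z = x'" for z
  proof (rule incoming_zero)
    have zr: "z \<notin> rels G" "z \<noteq> y" "z \<noteq> b" using z fr by auto
    have "tgt G11 q \<noteq> Some z" if "q \<in> rels G11" for q
    proof -
      have "q = x' \<or> q = x \<or> q = y \<or> (q \<in> rels G \<and> q \<noteq> b \<and> q \<noteq> x \<and> q \<noteq> x' \<and> q \<noteq> y)"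
        using that fr unfolding G11(1) by auto
      then show ?thesis
      proof (elim disjE conjE)
        assume q: "q \<in> rels G" "q \<noteq> b" "q \<noteq> x" "q \<noteq> x'" "q \<noteq> y"
        have "tgt G q \<noteq> Some z" using simple_notgt[OF S zr(1)] q(1) by blast
        then show ?thesis using q G11(3) by simp
      qed (use G11(3) zr fr in simp_all)
    qed
    then show "{q \<in> rels G11. tgt G11 q = Some z} = {}" by blast
    show "count (buf G11 q) z = 0" if "q \<in> rels G11" for q
    proof -
      have "q \<noteq> b" "q = x \<or> q = x' \<or> q = y \<or> q \<in> rels G" using that fr unfolding G11(1) by auto
      then have "buf G11 q = {#}" using D(3)[of q] unfolding G11(4) by auto
      then show ?thesis by simp
    qed
  qed
  define G12 where "G12 = merge_relays G11 x x'"
  have s12: "ifr_step P G11 G12" unfolding G12_def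
  proof (rule relay_fusion[OF _ _ fr(10) refl _ _ inc11 inc11])
    show "x \<in> rels G11" "x' \<in> rels G11" using G11(1) by simp_all
    show "own G11 x' = own G11 x" using G11(2) fr by simp
    show "same_target G11 x x'" using G11(3) fr by (simp add: same_target_def)
  qed simp_all
  have G12: "rels G12 = insert x (insert y (rels G))"
     "own G12 = (own G)(b := w, y := w, x := v, x' := v)"
     "tgt G12 = (tgt G)(b := Some r1, y := None, x := Some y, x' := Some y)"
     "\<And>z. z \<in> rels G12 \<Longrightarrow> buf G12 z = {#}"
  proof -
    show "rels G12 = insert x (insert y (rels G))" unfolding G12_def merge_relays_def
      using G11(1) fr by auto
    show "own G12 = (own G)(b := w, y := w, x := v, x' := v)"
      "tgt G12 = (tgt G)(b := Some r1, y := None, x := Some y, x' := Some y)"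
      unfolding G12_def merge_relays_def using G11 by simp_all
    fix z assume "z \<in> rels G12"
    then have "z = x \<or> z = y \<or> (z \<in> rels G \<and> z \<noteq> b \<and> z \<noteq> x')"
      unfolding G12_def merge_relays_def using G11(1) fr by auto
    then show "buf G12 z = {#}" unfolding G12_def merge_relays_def using G11(4) D(3)[of z] fr fd
      by auto
  qed
  have steps: "(ifr_step P)\<^sup>*\<^sup>* G G12"
    using s1 s2 s3 s4 s5 s6 s7 s8 s9 s10 s11 s12
    by (meson rtranclp.rtrancl_into_rtrancl rtranclp.rtrancl_refl)
  have fin: "finite (rels G12)" using G12(1) D(1) by simp
  have simp12: "simple_rg P G12"
  proof (rule simple_I[OF fin])
    show "own G12 z \<in> P" if "z \<in> rels G12" for z
    proof -
      have "z = x \<or> z = y \<or> (z \<in> rels G \<and> z \<noteq> b \<and> z \<noteq> x')" using that fr unfolding G12(1) by auto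
      then show ?thesis using G12(2) D(2)[of z] vP wP fr fd by auto
    qed
    show "buf G12 z = {#}" if "z \<in> rels G12" for z using G12(4)[OF that] .
    show "t' \<in> rels G12 \<and> tgt G12 t' = None" if za: "z \<in> rels G12" "tgt G12 z = Some t'" for z t'
    proof -
      consider "z = x" | "z = y" | "z \<in> rels G" "z \<noteq> b" "z \<noteq> x'" "z \<noteq> x" "z \<noteq> y"
        using za(1) fr unfolding G12(1) by blast
      then show ?thesis
      proof cases
        case 1 then show ?thesis using za(2) G12(1,3) fr by auto
      next
        case 2 then show ?thesis using za(2) G12(3) fr by simp
      next
        case 3
        have tz: "tgt G z = Some t'" using za(2) G12(3) 3 by simp
        have tt: "t' \<in> rels G \<and> tgt G t' = None" using D(4)[OF 3(1) tz] .
        then have "t' \<noteq> b" "t' \<noteq> y" "t' \<noteq> x" "t' \<noteq> x'" using fr by auto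
        then show ?thesis using tt G12(1,3) by simp
      qed
    qed
    show "card {z \<in> rels G12. tgt G12 z = Some t'} = 1" if ta: "t' \<in> rels G12" "tgt G12 t' = None" for t'
    proof (cases "t' = y")
      case True
      have "{z \<in> rels G12. tgt G12 z = Some t'} = {x}"
        unfolding G12(1) G12(3) True using simple_notgt[OF S fr(2)] fr fd by auto
      then show ?thesis by simp
    next
      case False
      have "t' \<noteq> x"
      proof
        assume "t' = x"
        then have "tgt G12 t' = Some y" using G12(3) fr by simp
        then show False using ta(2) by simp
      qed
      then have t'G: "t' \<in> rels G" using ta(1) False unfolding G12(1) by blast
      then have t'o: "t' \<noteq> b" "t' \<noteq> x'" "t' \<noteq> x" "t' \<noteq> y" using fr by auto
      have t'N: "tgt G t' = None" using ta(2) G12(3) t'o by simp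
      have "{z \<in> rels G12. tgt G12 z = Some t'} = {z \<in> rels G. tgt G z = Some t'}"
        unfolding G12(1) G12(3) using t'o fr by auto
      then show ?thesis using D(5)[OF t'G t'N] by simp
    qed
  qed
  have ns: "NS G12 = insert x (NS G)" unfolding NS_def G12(1) G12(3) using fr fd by auto
  have fNS: "finite (NS G)" using D(1) by (simp add: NS_def)
  have xNS: "x \<notin> NS G" using fr by (simp add: NS_def)
  have "CPG G12 = {#edge G12 x#} + (\<Sum>z\<in>NS G. {#edge G12 z#})"
    unfolding CPG_sum[OF fin] ns sum.insert[OF fNS xNS] by simp
  also have "(\<Sum>z\<in>NS G. {#edge G12 z#}) = (\<Sum>z\<in>NS G. {#edge G z#})"
  proof (rule sum.cong)
    fix z assume z: "z \<in> NS G"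
    then obtain q where q: "z \<in> rels G" "tgt G z = Some q" by (auto simp: NS_def)
    have "q \<in> rels G" using D(4)[OF q] by blast
    then have "z \<noteq> b" "z \<noteq> y" "z \<noteq> x" "z \<noteq> x'" "q \<noteq> b" "q \<noteq> y" "q \<noteq> x" "q \<noteq> x'"
      using q fr by auto
    then show "{#edge G12 z#} = {#edge G z#}" using q G12(2,3) by (simp add: edge_def)
  qed simp
  also have "edge G12 x = (own G t1, own G t2)" using G12 fr by (simp add: edge_def v_def w_def)
  finally have "CPG G12 = CPG G + {#(own G t1, own G t2)#}"
    using CPG_sum[OF D(1)] by simp
  moreover have "\<forall>z\<in>rels G. own G12 z = own G z \<and> tgt G12 z = tgt G z"
  proof
    fix z assume "z \<in> rels G"
    then have "z \<noteq> b" "z \<noteq> y" "z \<noteq> x" "z \<noteq> x'" using fr by auto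
    then show "own G12 z = own G z \<and> tgt G12 z = tgt G z" using G12(2,3) by simp
  qed
  moreover have "own G12 y = own G t2 \<and> tgt G12 y = None" using G12(2,3) fr by (simp add: w_def)
  ultimately show ?thesis using steps simp12 G12(1) by blast
qed



lemma mem_CPG:
  assumes S: "simple_rg P G" and m: "(a, c) \<in># CPG G"
  obtains r t where "r \<in> rels G" "tgt G r = Some t" "own G r = a" "own G t = c"
proof -
  note D = simple_D[OF S]
  have fNS: "finite (NS G)" using D(1) by (simp add: NS_def)
  have "(a, c) \<in># (\<Sum>r\<in>NS G. {#edge G r#})" using m unfolding CPG_sum[OF D(1)] .
  then have "\<exists>r\<in>NS G. edge G r = (a, c)" by (rule iffD1[OF mem_sum_single[OF fNS]])
  then obtain r where r: "r \<in> NS G" "edge G r = (a, c)" by blast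
  then obtain t where "r \<in> rels G" "tgt G r = Some t" by (auto simp: NS_def)
  then show ?thesis using that r(2) by (simp add: edge_def)
qed

lemma fresh4:
  assumes "finite (A :: nat set)"
  obtains a b c d where "a \<notin> A" "b \<notin> A" "c \<notin> A" "d \<notin> A"
    "a \<noteq> b" "a \<noteq> c" "a \<noteq> d" "b \<noteq> c" "b \<noteq> d" "c \<noteq> d"
proof -
  obtain k where "\<forall>x\<in>A. x < k" using assms finite_nat_set_iff_bounded by blast
  then show ?thesis using that[of k "k+1" "k+2" "k+3"] by force
qed

theorem lemma1:
  fixes P :: "'p set" and G :: "'p rstate" and M' :: "('p \<times> 'p) multiset" and p :: prule
  assumes "simple_rg P G"
    and "proc_step p (CPG G) M'"
  shows "\<exists>G'. (ifr_step P)\<^sup>*\<^sup>* G G' \<and> simple_rg P G' \<and> CPG G' = M'"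
proof -
  note S = assms(1)
  note D = simple_D[OF S]
  obtain f1 f2 f3 f4 where fr: "f1 \<notin> rels G" "f2 \<notin> rels G" "f3 \<notin> rels G" "f4 \<notin> rels G"
    "f1 \<noteq> f2" "f1 \<noteq> f3" "f1 \<noteq> f4" "f2 \<noteq> f3" "f2 \<noteq> f4" "f3 \<noteq> f4"
    using fresh4[OF D(1)] by blast
  show ?thesis
  proof (cases p)
    case Introduction
    then obtain u v w where uv: "(u, v) \<in># CPG G" "(u, w) \<in># CPG G" "v \<noteq> w" "M' = CPG G + {#(v, w)#}"
      using assms(2) by auto
    obtain r1 t1 where a: "r1 \<in> rels G" "tgt G r1 = Some t1" "own G r1 = u" "own G t1 = v"
      using mem_CPG[OF S uv(1)] by blast
    obtain r2 t2 where b: "r2 \<in> rels G" "tgt G r2 = Some t2" "own G r2 = u" "own G t2 = w"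
      using mem_CPG[OF S uv(2)] by blast
    show ?thesis
      using intro_case[OF S a(1) b(1) a(2) b(2) _ _ fr] a b uv by auto
  next
    case Delegation
    then obtain u v w where uv: "(u, v) \<in># CPG G" "(u, w) \<in># CPG G" "u \<noteq> v" "v \<noteq> w" "u \<noteq> w"
       "M' = CPG G - {#(u, w)#} + {#(v, w)#}"
      using assms(2) by auto
    obtain r1 t1 where a: "r1 \<in> rels G" "tgt G r1 = Some t1" "own G r1 = u" "own G t1 = v"
      using mem_CPG[OF S uv(1)] by blast
    obtain r2 t2 where b: "r2 \<in> rels G" "tgt G r2 = Some t2" "own G r2 = u" "own G t2 = w"
      using mem_CPG[OF S uv(2)] by blast
    obtain G1 where G1: "(ifr_step P)\<^sup>*\<^sup>* G G1" "simple_rg P G1"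
      "CPG G1 = CPG G + {#(v, w)#}" "rels G1 = insert f3 (insert f2 (rels G))"
      "\<forall>z\<in>rels G. own G1 z = own G z \<and> tgt G1 z = tgt G z" "own G1 f2 = w" "tgt G1 f2 = None"
      using intro_case[OF S a(1) b(1) a(2) b(2) _ _ fr] a b uv by auto
    have t: "t1 \<in> rels G" "tgt G t1 = None" "t2 \<in> rels G" "tgt G t2 = None"
      using D(4)[OF a(1) a(2)] D(4)[OF b(1) b(2)] by auto
    have t12: "t1 \<noteq> t2" using a(4) b(4) uv(4) by auto
    have r12: "r1 \<noteq> r2" using a(2) b(2) t12 by auto
    have r1t2: "r1 \<noteq> t2" using a(2) t(4) by auto
    have f2: "f2 \<noteq> t2" "f2 \<noteq> r2" using fr(2) t(3) b(1) by auto
    have g1: "r2 \<in> rels G1" "tgt G1 r2 = Some t2" "r1 \<in> rels G1" "own G1 r1 = own G1 r2"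
      "f2 \<in> rels G1" "own G1 f2 = own G1 t2"
      using G1(4,5,6) a b t by auto
    obtain G2 where G2: "(ifr_step P)\<^sup>*\<^sup>* G1 G2" "simple_rg P G2" "CPG G2 = CPG G1 - {#edge G1 r2#}"
      using delete_pair[OF G1(2) g1(1) g1(2) g1(3) r12 g1(4) r1t2 g1(5) f2(1) f2(2) g1(6)] by blast
    have "edge G1 r2 = (u, w)" using G1(5) a b t by (auto simp: edge_def)
    then have "CPG G2 = M'" using G2(3) G1(3) uv by (auto simp: diff_union_single_conv)
    moreover have "(ifr_step P)\<^sup>*\<^sup>* G G2" using rtranclp_trans[OF G1(1) G2(1)] .
    ultimately show ?thesis using G2(2) by blast
  next
    case Fusion
    then obtain u v where uv: "count (CPG G) (u, v) \<ge> 2" "M' = CPG G - {#(u, v)#}"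
      using assms(2) by auto
    then have "0 < count (CPG G) (u, v)" by linarith
    then have "(u, v) \<in># CPG G" by simp
    then obtain r1 t1 where a: "r1 \<in> rels G" "tgt G r1 = Some t1" "own G r1 = u" "own G t1 = v"
      using mem_CPG[OF S] by blast
    have e1: "edge G r1 = (u, v)" using a by (simp add: edge_def)
    have "CPG G = {#edge G r1#} + (\<Sum>r\<in>NS G - {r1}. {#edge G r#})"
      by (rule CPG_remove[OF D(1) a(1) a(2)])
    then have "count (\<Sum>r\<in>NS G - {r1}. {#edge G r#}) (u, v) \<ge> 1" using uv(1) e1 by simp
    then have "(u, v) \<in># (\<Sum>r\<in>NS G - {r1}. {#edge G r#})" by simp
    moreover have fN: "finite (NS G - {r1})" using D(1) by (simp add: NS_def)
    from calculation(1) have "\<exists>r\<in>NS G - {r1}. edge G r = (u, v)" by (rule iffD1[OF mem_sum_single[OF fN]])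
    then obtain r2 where r2: "r2 \<in> NS G - {r1}" "edge G r2 = (u, v)" by blast
    then obtain t2 where b: "r2 \<in> rels G" "tgt G r2 = Some t2" "own G r2 = u" "own G t2 = v" "r2 \<noteq> r1"
      by (auto simp: NS_def edge_def)
    have t: "t1 \<in> rels G" "tgt G t1 = None" "t2 \<in> rels G" "tgt G t2 = None"
      using D(4)[OF a(1) a(2)] D(4)[OF b(1) b(2)] by auto
    have t12: "t1 \<noteq> t2" using simple_unique[OF S a(1) b(1)] a(2) b(2) b(5) by auto
    have o1: "own G r1 = own G r2" using a(3) b(3) by simp
    have o2: "own G t1 = own G t2" using a(4) b(4) by simp
    have r1t2: "r1 \<noteq> t2" using a(2) t(4) by auto
    have t1r2: "t1 \<noteq> r2" using b(2) t(2) by auto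
    obtain G2 where "(ifr_step P)\<^sup>*\<^sup>* G G2" "simple_rg P G2" "CPG G2 = CPG G - {#edge G r2#}"
      using delete_pair[OF S b(1) b(2) a(1) b(5)[symmetric] o1 r1t2 t(1) t12 t1r2 o2] by blast
    then show ?thesis using r2 uv by auto
  next
    case Reversal
    then obtain u v where uv: "(u, v) \<in># CPG G" "M' = CPG G - {#(u, v)#} + {#(v, u)#}"
      using assms(2) by auto
    obtain r t where a: "r \<in> rels G" "tgt G r = Some t" "own G r = u" "own G t = v"
      using mem_CPG[OF S uv(1)] by blast
    show ?thesis using reversal_case[OF S a(1) a(2) fr(1) fr(2) fr(5)] a uv
      by (simp add: edge_def)
  qed
qed

end
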